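(* For every annotated CQ $(q,E)$ in which $E=(\emptyset,E^-)$ consists of negative examples only, every $\preceq^{\mathrm{cod}}$-repair for $(q,E)$ is a $\preceq^{\mathrm{cod}}$-specialization for $(q,E)$.
   Context: Data examples are pairs $(I,\mathbf a)$ with $I$ a finite instance and $\mathbf a$ a $k$-tuple of its values. A $k$-ary CQ is $q(x_1,\dots,x_k)\text{ :- }\alpha_1,\dots,\alpha_n$ (relational atoms, no constants, each answer variable in some atom). $[\![q]\!]$ is the set of data examples $(I,\mathbf a)$ with $\mathbf a\in q(I)$; $\subseteq$ is query containment. $q$ fits $E=(E^+,E^-)$ iff $E^+\subseteq[\![q]\!]$ and $E^-\cap[\![q]\!]=\emptyset$. $q_1\preceq^{\mathrm{cod}}_q q_2$ iff $[\![q]\!]\oplus[\![q_1]\!]\subseteq[\![q]\!]\oplus[\![q_2]\!]$ ($\oplus$ symmetric difference), $\prec_q$ its strict part. A $\preceq^{\mathrm{cod}}$-repair for $(q,E)$ is a CQ $q'$ fitting $E$ such that no CQ $q''$ fitting $E$ has $q''\prec^{\mathrm{cod}}_q q'$. A $\preceq^{\mathrm{cod}}$-specialization for $(q,E)$ is a CQ $q'$ fitting $E$ with $q'\subseteq q$ such that no CQ $q''$ fitting $E$ with $q''\subseteq q$ has $q''\prec^{\mathrm{cod}}_q q'$. Candidate CQs use only relation symbols occurring in $q$ and $E$. *)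

theory Defs
  imports Main
begin

(* Schema: relation symbols of type 'r with arity function ar.
   Instance values and query variables are natural numbers (countably infinite supply). *)

type_synonym 'r fact = "'r \<times> nat list"
type_synonym 'r inst = "'r fact set"
type_synonym 'r dex = "'r inst \<times> nat list"
(* CQ: answer variables x1..xk and list of relational atoms *)
type_synonym 'r cq = "nat list \<times> ('r \<times> nat list) list"

definition adom :: "'r inst \<Rightarrow> nat set" where
  "adom I = (\<Union>(R, vs)\<in>I. set vs)"

definition wf_inst :: "('r \<Rightarrow> nat) \<Rightarrow> 'r inst \<Rightarrow> bool" where
  "wf_inst ar I \<longleftrightarrow> finite I \<and> (\<forall>(R, vs)\<in>I. length vs = ar R)"

definition data_example :: "('r \<Rightarrow> nat) \<Rightarrow> nat \<Rightarrow> 'r dex \<Rightarrow> bool" where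
  "data_example ar k e \<longleftrightarrow>
     wf_inst ar (fst e) \<and> length (snd e) = k \<and> set (snd e) \<subseteq> adom (fst e)"

definition cq_vars :: "'r cq \<Rightarrow> nat set" where
  "cq_vars q = (\<Union>(R, ys)\<in>set (snd q). set ys)"

definition cq_rels :: "'r cq \<Rightarrow> 'r set" where
  "cq_rels q = fst ` set (snd q)"

definition wf_cq :: "('r \<Rightarrow> nat) \<Rightarrow> nat \<Rightarrow> 'r cq \<Rightarrow> bool" where
  "wf_cq ar k q \<longleftrightarrow> length (fst q) = k \<and>
     (\<forall>(R, ys)\<in>set (snd q). length ys = ar R) \<and>
     set (fst q) \<subseteq> cq_vars q"

definition answer :: "'r cq \<Rightarrow> 'r inst \<Rightarrow> nat list \<Rightarrow> bool" where
  "answer q I a \<longleftrightarrow> (\<exists>h :: nat \<Rightarrow> nat. map h (fst q) = a \<and>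
     (\<forall>(R, ys)\<in>set (snd q). (R, map h ys) \<in> I))"

definition sem :: "('r \<Rightarrow> nat) \<Rightarrow> nat \<Rightarrow> 'r cq \<Rightarrow> 'r dex set" where
  "sem ar k q = {e. data_example ar k e \<and> answer q (fst e) (snd e)}"

definition cq_contained :: "('r \<Rightarrow> nat) \<Rightarrow> nat \<Rightarrow> 'r cq \<Rightarrow> 'r cq \<Rightarrow> bool" where
  "cq_contained ar k q1 q2 \<longleftrightarrow> sem ar k q1 \<subseteq> sem ar k q2"

definition fits :: "('r \<Rightarrow> nat) \<Rightarrow> nat \<Rightarrow> 'r cq \<Rightarrow> 'r dex set \<times> 'r dex set \<Rightarrow> bool" where
  "fits ar k q E \<longleftrightarrow> fst E \<subseteq> sem ar k q \<and> snd E \<inter> sem ar k q = {}"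

definition symdiff :: "'a set \<Rightarrow> 'a set \<Rightarrow> 'a set" where
  "symdiff A B = (A - B) \<union> (B - A)"

definition cod_le :: "('r \<Rightarrow> nat) \<Rightarrow> nat \<Rightarrow> 'r cq \<Rightarrow> 'r cq \<Rightarrow> 'r cq \<Rightarrow> bool" where
  "cod_le ar k q q1 q2 \<longleftrightarrow> symdiff (sem ar k q) (sem ar k q1) \<subseteq> symdiff (sem ar k q) (sem ar k q2)"

definition cod_less :: "('r \<Rightarrow> nat) \<Rightarrow> nat \<Rightarrow> 'r cq \<Rightarrow> 'r cq \<Rightarrow> 'r cq \<Rightarrow> bool" where
  "cod_less ar k q q1 q2 \<longleftrightarrow> cod_le ar k q q1 q2 \<and> \<not> cod_le ar k q q2 q1"

definition sig :: "'r cq \<Rightarrow> 'r dex set \<times> 'r dex set \<Rightarrow> 'r set" where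
  "sig q E = cq_rels q \<union> (\<Union>e\<in>fst E \<union> snd E. fst ` fst e)"

definition candidate :: "('r \<Rightarrow> nat) \<Rightarrow> nat \<Rightarrow> 'r cq \<Rightarrow> 'r dex set \<times> 'r dex set \<Rightarrow> 'r cq \<Rightarrow> bool" where
  "candidate ar k q E q' \<longleftrightarrow> wf_cq ar k q' \<and> cq_rels q' \<subseteq> sig q E"

definition cod_repair :: "('r \<Rightarrow> nat) \<Rightarrow> nat \<Rightarrow> 'r cq \<Rightarrow> 'r dex set \<times> 'r dex set \<Rightarrow> 'r cq \<Rightarrow> bool" where
  "cod_repair ar k q E q' \<longleftrightarrow> candidate ar k q E q' \<and> fits ar k q' E \<and>
     \<not> (\<exists>q''. candidate ar k q E q'' \<and> fits ar k q'' E \<and> cod_less ar k q q'' q')"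

definition cod_specialization :: "('r \<Rightarrow> nat) \<Rightarrow> nat \<Rightarrow> 'r cq \<Rightarrow> 'r dex set \<times> 'r dex set \<Rightarrow> 'r cq \<Rightarrow> bool" where
  "cod_specialization ar k q E q' \<longleftrightarrow> candidate ar k q E q' \<and> fits ar k q' E \<and> cq_contained ar k q' q \<and>
     \<not> (\<exists>q''. candidate ar k q E q'' \<and> fits ar k q'' E \<and> cq_contained ar k q'' q \<and> cod_less ar k q q'' q')"

definition annotated_cq :: "('r \<Rightarrow> nat) \<Rightarrow> nat \<Rightarrow> 'r cq \<Rightarrow> 'r dex set \<times> 'r dex set \<Rightarrow> bool" where
  "annotated_cq ar k q E \<longleftrightarrow> wf_cq ar k q \<and> finite (fst E) \<and> finite (snd E) \<and>
     (\<forall>e\<in>fst E \<union> snd E. data_example ar k e)"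

end

theory Submission
  imports Defs
begin

definition unif :: "(nat \<times> nat) set \<Rightarrow> nat \<Rightarrow> nat" where
  "unif P v = (LEAST w. (v, w) \<in> (P \<union> P\<inverse>)\<^sup>*)"

lemma unif_rel: "(v, unif P v) \<in> (P \<union> P\<inverse>)\<^sup>*"
  unfolding unif_def by (rule LeastI[of _ v]) simp

lemma unif_eq:
  assumes "(a, b) \<in> P" shows "unif P a = unif P b"
proof -
  let ?E = "(P \<union> P\<inverse>)\<^sup>*"
  have ab: "(a, b) \<in> ?E" "(b, a) \<in> ?E" using assms by auto
  have "\<And>w. (a, w) \<in> ?E \<longleftrightarrow> (b, w) \<in> ?E"
    using ab by (meson rtrancl_trans)
  thus ?thesis unfolding unif_def by simp
qed

lemma resp_rtrancl:
  assumes "\<And>a b. (a, b) \<in> P \<Longrightarrow> H a = H b"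
    and "(v, w) \<in> (P \<union> P\<inverse>)\<^sup>*"
  shows "H v = H w"
  using assms(2)
proof (induction rule: rtrancl_induct)
  case base then show ?case by simp
next
  case (step y z) then show ?case using assms(1) by auto
qed

lemma unif_factor:
  assumes "\<And>a b. (a, b) \<in> P \<Longrightarrow> H a = H b"
  shows "H (unif P v) = H v"
  using resp_rtrancl[of P H v "unif P v", OF assms unif_rel] by simp

lemma conj_exists:
  fixes q q' :: "'r cq"
  assumes wq: "wf_cq ar k q" and wq': "wf_cq ar k q'"
  shows "\<exists>q''. wf_cq ar k q'' \<and> cq_rels q'' = cq_rels q \<union> cq_rels q' \<and>
              sem ar k q'' = sem ar k q \<inter> sem ar k q'"
proof -
  obtain xs A where q: "q = (xs, A)" by (cases q)
  obtain ys B where q': "q' = (ys, B)" by (cases q')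
  define N where "N = Suc (sum_list (xs @ concat (map snd A)))"
  have xsN: "\<And>v. v \<in> set xs \<Longrightarrow> v < N"
    unfolding N_def using member_le_sum_list[of _ "xs @ concat (map snd A)"] by fastforce
  have AN: "\<And>R vs v. (R, vs) \<in> set A \<Longrightarrow> v \<in> set vs \<Longrightarrow> v < N"
  proof -
    fix R vs v assume "(R, vs) \<in> set A" "v \<in> set vs"
    then have "v \<in> set (xs @ concat (map snd A))" by force
    then show "v < N" unfolding N_def using member_le_sum_list by fastforce
  qed
  define g where "g = (\<lambda>v::nat. v + N)"
  define P where "P = set (zip xs (map g ys))"
  define \<theta> where "\<theta> = unif P"
  have lens: "length xs = k" "length ys = k" using wq wq' q q' unfolding wf_cq_def by auto
  have thP: "\<And>i. i < k \<Longrightarrow> \<theta> (xs ! i) = \<theta> (g (ys ! i))"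
  proof -
    fix i assume "i < k"
    then have "(xs ! i, g (ys ! i)) \<in> P" unfolding P_def using lens
      by (metis in_set_zip fst_conv snd_conv length_map nth_map)
    then show "\<theta> (xs ! i) = \<theta> (g (ys ! i))" unfolding \<theta>_def by (rule unif_eq)
  qed
  define q'' where "q'' = (map \<theta> xs, map (\<lambda>(R, vs). (R, map \<theta> vs)) A @
                              map (\<lambda>(R, vs). (R, map (\<theta> \<circ> g) vs)) B)"
  have ans: "answer q'' I a \<longleftrightarrow> answer q I a \<and> answer q' I a" for I a
  proof
    assume "answer q'' I a"
    then obtain h where h1: "map h (map \<theta> xs) = a"
      and hh: "\<forall>(R, ys)\<in>set (snd q''). (R, map h ys) \<in> I"
      unfolding answer_def q''_def by auto
    have h2: "\<forall>(R, vs)\<in>set A. (R, map h (map \<theta> vs)) \<in> I"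
    proof (intro ballI, clarify)
      fix R vs assume "(R, vs) \<in> set A"
      then have "(R, map \<theta> vs) \<in> set (snd q'')" unfolding q''_def by force
      then show "(R, map h (map \<theta> vs)) \<in> I" using hh by auto
    qed
    have h3: "\<forall>(R, vs)\<in>set B. (R, map h (map (\<theta> \<circ> g) vs)) \<in> I"
    proof (intro ballI, clarify)
      fix R vs assume "(R, vs) \<in> set B"
      then have "(R, map (\<theta> \<circ> g) vs) \<in> set (snd q'')" unfolding q''_def by force
      then show "(R, map h (map (\<theta> \<circ> g) vs)) \<in> I" using hh by auto
    qed
    have "answer q I a" unfolding answer_def q
      using h1 h2 by (intro exI[of _ "h \<circ> \<theta>"]) auto
    moreover have "map (h \<circ> \<theta> \<circ> g) ys = a"
      using h1 lens thP by (auto intro!: nth_equalityI)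
    then have "answer q' I a" unfolding answer_def q'
      using h3 by (intro exI[of _ "h \<circ> \<theta> \<circ> g"]) (auto simp: comp_assoc)
    ultimately show "answer q I a \<and> answer q' I a" ..
  next
    assume "answer q I a \<and> answer q' I a"
    then obtain h1 h2 where a1: "map h1 xs = a" and A1: "\<forall>(R, vs)\<in>set A. (R, map h1 vs) \<in> I"
      and a2: "map h2 ys = a" and B2: "\<forall>(R, vs)\<in>set B. (R, map h2 vs) \<in> I"
      unfolding answer_def q q' by auto
    define H where "H = (\<lambda>v. if v < N then h1 v else h2 (v - N))"
    have resp: "H x = H y" if "(x, y) \<in> P" for x y
    proof -
      from that obtain i where i: "i < length xs" "i < length ys" "x = xs ! i" "y = g (ys ! i)"
        unfolding P_def by (auto simp: in_set_zip)
      have "H x = h1 (xs ! i)" using xsN i unfolding H_def by auto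
      also have "\<dots> = a ! i" using a1 i by auto
      also have "\<dots> = h2 (ys ! i)" using a2 i by auto
      also have "\<dots> = H y" using i unfolding H_def g_def by auto
      finally show ?thesis .
    qed
    have Hth: "\<And>v. H (\<theta> v) = H v" unfolding \<theta>_def by (rule unif_factor[OF resp])
    have mH: "\<And>vs. map H (map \<theta> vs) = map H vs" by (simp add: Hth)
    have "map H (map \<theta> xs) = a" unfolding mH using a1 xsN by (auto simp: H_def)
    moreover have "\<forall>(R, vs)\<in>set A. (R, map H (map \<theta> vs)) \<in> I"
    proof (intro ballI, clarify)
      fix R vs assume m: "(R, vs) \<in> set A"
      have "map H (map \<theta> vs) = map h1 vs" unfolding mH using AN[OF m] by (auto simp: H_def)
      moreover have "(R, map h1 vs) \<in> I" using A1 m by auto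
      ultimately show "(R, map H (map \<theta> vs)) \<in> I" by (simp only:)
    qed
    moreover have "\<forall>(R, vs)\<in>set B. (R, map H (map (\<theta> \<circ> g) vs)) \<in> I"
    proof (intro ballI, clarify)
      fix R vs assume m: "(R, vs) \<in> set B"
      have "map H (map (\<theta> \<circ> g) vs) = map H (map g vs)" by (simp add: Hth)
      also have "\<dots> = map h2 vs" by (auto simp: H_def g_def)
      finally have "map H (map (\<theta> \<circ> g) vs) = map h2 vs" .
      moreover have "(R, map h2 vs) \<in> I" using B2 m by auto
      ultimately show "(R, map H (map (\<theta> \<circ> g) vs)) \<in> I" by (simp only:)
    qed
    ultimately show "answer q'' I a" unfolding answer_def q''_def
      by (intro exI[of _ H]) auto
  qed
  have "wf_cq ar k q''"
  proof -
    have "length (map \<theta> xs) = k" using lens by simp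
    moreover have "\<forall>(R, vs)\<in>set (snd q''). length vs = ar R"
      using wq wq' q q' unfolding wf_cq_def q''_def by auto
    moreover have "set (map \<theta> xs) \<subseteq> cq_vars q''"
    proof
      fix w assume "w \<in> set (map \<theta> xs)"
      then obtain v where v: "v \<in> set xs" "w = \<theta> v" by auto
      then obtain R vs where "(R, vs) \<in> set A" "v \<in> set vs"
        using wq q unfolding wf_cq_def cq_vars_def by auto
      then show "w \<in> cq_vars q''" unfolding cq_vars_def q''_def using v by force
    qed
    ultimately show ?thesis unfolding wf_cq_def q''_def by simp
  qed
  moreover have "cq_rels q'' = cq_rels q \<union> cq_rels q'"
    unfolding cq_rels_def q''_def q q' by force
  moreover have "sem ar k q'' = sem ar k q \<inter> sem ar k q'"
    unfolding sem_def using ans by auto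
  ultimately show ?thesis by blast
qed

theorem proposition21:
  fixes ar :: "'r \<Rightarrow> nat" and k :: nat and q q' :: "'r cq" and Eneg :: "'r dex set"
  assumes "annotated_cq ar k q ({}, Eneg)"
    and "cod_repair ar k q ({}, Eneg) q'"
  shows "cod_specialization ar k q ({}, Eneg) q'"
proof -
  have wq: "wf_cq ar k q" using assms(1) unfolding annotated_cq_def by simp
  have cand: "candidate ar k q ({}, Eneg) q'" and fit: "fits ar k q' ({}, Eneg)"
    and nob: "\<not> (\<exists>q''. candidate ar k q ({}, Eneg) q'' \<and> fits ar k q'' ({}, Eneg) \<and> cod_less ar k q q'' q')"
    using assms(2) unfolding cod_repair_def by auto
  have wq': "wf_cq ar k q'" using cand unfolding candidate_def by simp
  have cont: "cq_contained ar k q' q"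
  proof (rule ccontr)
    assume nc: "\<not> cq_contained ar k q' q"
    obtain q'' where w'': "wf_cq ar k q''" and r'': "cq_rels q'' = cq_rels q \<union> cq_rels q'"
      and s'': "sem ar k q'' = sem ar k q \<inter> sem ar k q'"
      using conj_exists[OF wq wq'] by blast
    have "candidate ar k q ({}, Eneg) q''"
      using w'' r'' cand unfolding candidate_def sig_def by auto
    moreover have "fits ar k q'' ({}, Eneg)" using fit s'' unfolding fits_def by auto
    moreover have "cod_less ar k q q'' q'"
      using nc s'' unfolding cod_less_def cod_le_def symdiff_def cq_contained_def by auto
    ultimately show False using nob by blast
  qed
  show ?thesis unfolding cod_specialization_def using cand fit cont nob by blast
qed

end
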